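(* Let $\Gamma$ be a compact subset of a Euclidean space $(\mathbb R^n,d)$, let $\delta>0$, and let $m\in\mathbb N$ with $m\le n$, such that for every $\mathcal P\in\mathrm{Gr}(n,m)$ there exists $x\in\Gamma$ with $d(x,\mathcal P)\ge\delta$. Then there are $x_1,\dots,x_{m+1}\in\Gamma$ such that $\mathrm{MinHeight}(x_1,\dots,x_{m+1})\ge\delta$.
   Context: $\mathrm{Gr}(n,m)$ is the set of $m$-dimensional linear subspaces of $\mathbb R^n$. For vectors $a_1,\dots,a_k$ in the Euclidean space $(\mathbb R^n,d)$, $\mathrm{MinHeight}(a_1,\dots,a_k):=\min_{j\in\{1,\dots,k\}}d\big(a_j,\mathrm{span}(a_1,\dots,\widehat{a}_j,\dots,a_k)\big)$, where $\widehat{a}_j$ means $a_j$ is omitted (the span of the empty family is $\{0\}$). *)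

theory Defs
  imports "HOL-Analysis.Analysis"
begin

definition Grassmannian :: "nat \<Rightarrow> 'a::euclidean_space set set" where
  "Grassmannian m = {P. subspace P \<and> dim P = m}"

definition min_height :: "(nat \<Rightarrow> 'a::euclidean_space) \<Rightarrow> nat \<Rightarrow> real" where
  "min_height a k = Min ((\<lambda>j. infdist (a j) (span (a ` ({1..k} - {j})))) ` {1..k})"

end

theory Submission
  imports Defs "HOL-Analysis.Analysis"
begin


lemma infdist_proj:
  fixes a p :: "'a::euclidean_space"
  assumes "p \<in> span X" "\<forall>w\<in>span X. orthogonal (a - p) w"
  shows "infdist a (span X) = norm (a - p)"
proof (rule antisym)
  show "infdist a (span X) \<le> norm (a - p)"
    using infdist_le[OF assms(1), of a] by (simp add: dist_norm)
  have ne: "span X \<noteq> {}" using span_zero by blast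
  show "norm (a - p) \<le> infdist a (span X)"
    unfolding infdist_notempty[OF ne]
  proof (rule cINF_greatest[OF ne])
    fix w assume w: "w \<in> span X"
    have "p - w \<in> span X" using assms(1) w span_diff by blast
    then have o: "orthogonal (a - p) (p - w)" using assms(2) by blast
    have aw: "a - w = (a - p) + (p - w)" by simp
    have "(norm (a - w))\<^sup>2 = (norm (a - p))\<^sup>2 + (norm (p - w))\<^sup>2"
      unfolding aw by (rule norm_add_Pythagorean[OF o])
    then have "(norm (a - p))\<^sup>2 \<le> (norm (a - w))\<^sup>2" by simp
    then have "norm (a - p) \<le> norm (a - w)" by (rule power2_le_imp_le) simp
    then show "norm (a - p) \<le> dist a w" by (simp add: dist_norm)
  qed
qed

lemma proj_exists:
  fixes a :: "'a::euclidean_space"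
  obtains p where "p \<in> span X" "\<forall>w\<in>span X. orthogonal (a - p) w"
proof -
  obtain y z where "y \<in> span X" "\<And>w. w \<in> span X \<Longrightarrow> orthogonal z w" "a = y + z"
    using orthogonal_subspace_decomp_exists by blast
  then show ?thesis using that[of y] by auto
qed
lemma swap_sq:
  fixes a b pa pb :: "'a::euclidean_space"
  assumes pa: "pa \<in> span S" "\<forall>w\<in>span S. orthogonal (a - pa) w"
    and pb: "pb \<in> span S" "\<forall>w\<in>span S. orthogonal (b - pb) w"
  shows "(infdist a (span (insert b S)) * infdist b (span S))\<^sup>2
     = ((a - pa) \<bullet> (a - pa)) * ((b - pb) \<bullet> (b - pb)) - ((a - pa) \<bullet> (b - pb))\<^sup>2"
proof -
  define a' where "a' = a - pa"
  define b' where "b' = b - pb"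
  have db: "infdist b (span S) = norm b'" using infdist_proj[OF pb] b'_def by simp
  show ?thesis
  proof (cases "b' = 0")
    case True
    then have "b - pb = 0" unfolding b'_def .
    then show ?thesis using db True by simp
  next
    case False
    define t where "t = (a' \<bullet> b') / (b' \<bullet> b')"
    have bb: "b' \<bullet> b' \<noteq> 0" using False by simp
    define q where "q = pa + t *\<^sub>R b'"
    have qs: "q \<in> span (insert b S)"
    proof -
      have "pa \<in> span (insert b S)" using pa(1) span_mono[of S "insert b S"] by blast
      moreover have "b \<in> span (insert b S)" by (simp add: span_base)
      moreover have "pb \<in> span (insert b S)" using pb(1) span_mono[of S "insert b S"] by blast
      ultimately show ?thesis unfolding q_def b'_def
        by (intro span_add span_scale span_diff)
    qed
    have aq: "a - q = a' - t *\<^sub>R b'" unfolding q_def a'_def by simp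
    have orth: "\<forall>w\<in>span (insert b S). orthogonal (a - q) w"
    proof
      fix w assume "w \<in> span (insert b S)"
      then obtain k where k: "w - k *\<^sub>R b \<in> span S" using span_breakdown_eq by blast
      define s where "s = w - k *\<^sub>R b"
      have w: "w = s + k *\<^sub>R b' + k *\<^sub>R pb" unfolding s_def b'_def by (simp add: algebra_simps)
      have 1: "a' \<bullet> s = 0" "b' \<bullet> s = 0" "a' \<bullet> pb = 0" "b' \<bullet> pb = 0"
        using pa(2) pb(2) k pb(1) unfolding s_def a'_def b'_def orthogonal_def by auto
      have 2: "(a' - t *\<^sub>R b') \<bullet> b' = 0"
        unfolding t_def using bb by (simp add: inner_diff_left)
      show "orthogonal (a - q) w" unfolding orthogonal_def aq w
        using 1 2 by (simp add: inner_add_right inner_diff_left)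
    qed
    have da: "infdist a (span (insert b S)) = norm (a' - t *\<^sub>R b')"
      using infdist_proj[OF qs orth] aq by simp
    have "(norm (a' - t *\<^sub>R b') * norm b')\<^sup>2 = ((a' - t *\<^sub>R b') \<bullet> (a' - t *\<^sub>R b')) * (b' \<bullet> b')"
      by (simp add: power_mult_distrib power2_norm_eq_inner)
    also have "\<dots> = (a' \<bullet> a') * (b' \<bullet> b') - (a' \<bullet> b')\<^sup>2"
    proof -
      have e: "(a' - t *\<^sub>R b') \<bullet> (a' - t *\<^sub>R b') = a' \<bullet> a' - 2 * t * (a' \<bullet> b') + t\<^sup>2 * (b' \<bullet> b')"
        by (simp add: inner_diff_left inner_diff_right inner_commute[of b' a'] power2_eq_square algebra_simps)
      have tb: "t * (b' \<bullet> b') = a' \<bullet> b'" using bb unfolding t_def by simp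
      have "(a' \<bullet> a' - 2 * t * (a' \<bullet> b') + t\<^sup>2 * (b' \<bullet> b')) * (b' \<bullet> b')
          = a' \<bullet> a' * (b' \<bullet> b') - 2 * (a' \<bullet> b') * (t * (b' \<bullet> b')) + (t * (b' \<bullet> b'))\<^sup>2"
        by (simp add: algebra_simps power2_eq_square)
      then show ?thesis using e tb by (simp add: power2_eq_square)
    qed
    finally have X: "(infdist a (span (insert b S)) * infdist b (span S))\<^sup>2 = (a' \<bullet> a') * (b' \<bullet> b') - (a' \<bullet> b')\<^sup>2"
      by (simp only: da db)
    show ?thesis using X unfolding a'_def b'_def .
  qed
qed

lemma swap:
  fixes a b :: "'a::euclidean_space"
  shows "infdist a (span (insert b S)) * infdist b (span S)
       = infdist b (span (insert a S)) * infdist a (span S)"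
proof -
  obtain pa where pa: "pa \<in> span S" "\<forall>w\<in>span S. orthogonal (a - pa) w" using proj_exists by blast
  obtain pb where pb: "pb \<in> span S" "\<forall>w\<in>span S. orthogonal (b - pb) w" using proj_exists by blast
  have "(infdist a (span (insert b S)) * infdist b (span S))\<^sup>2
      = (infdist b (span (insert a S)) * infdist a (span S))\<^sup>2"
    unfolding swap_sq[OF pa pb] swap_sq[OF pb pa] by (simp add: inner_commute)
  then show ?thesis using infdist_nonneg
    by (metis power2_eq_imp_eq zero_le_mult_iff)
qed



primrec vol :: "(nat \<Rightarrow> 'a::euclidean_space) \<Rightarrow> nat \<Rightarrow> real" where
  "vol x 0 = 1"
| "vol x (Suc k) = infdist (x (Suc k)) (span (x ` {1..k})) * vol x k"

definition del :: "(nat \<Rightarrow> 'a) \<Rightarrow> nat \<Rightarrow> nat \<Rightarrow> 'a" where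
  "del x j = (\<lambda>i. if i < j then x i else x (Suc i))"

lemma vol_cong: "(\<forall>i\<in>{1..k}. x i = y i) \<Longrightarrow> vol x k = vol y k"
proof (induction k)
  case 0 then show ?case by simp
next
  case (Suc k)
  have "x ` {1..k} = y ` {1..k}" using Suc.prems by (intro image_cong) auto
  then show ?case using Suc by simp
qed

lemma vol_nonneg: "0 \<le> vol x k"
  by (induction k) (simp_all add: infdist_nonneg)

lemma del_image:
  assumes "j \<in> {1..Suc k}"
  shows "del x j ` {1..k} = x ` ({1..Suc k} - {j})"
proof
  show "del x j ` {1..k} \<subseteq> x ` ({1..Suc k} - {j})"
    using assms by (auto simp: del_def)
  show "x ` ({1..Suc k} - {j}) \<subseteq> del x j ` {1..k}"
  proof
    fix z assume "z \<in> x ` ({1..Suc k} - {j})"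
    then obtain i where i: "i \<in> {1..Suc k}" "i \<noteq> j" "z = x i" by blast
    show "z \<in> del x j ` {1..k}"
    proof (cases "i < j")
      case True
      then have "del x j i = z" "i \<in> {1..k}" using i assms by (auto simp: del_def)
      then show ?thesis by force
    next
      case False
      then have "del x j (i - 1) = z" "i - 1 \<in> {1..k}" using i assms by (auto simp: del_def)
      then show ?thesis by force
    qed
  qed
qed

lemma vol_del:
  assumes "j \<in> {1..k}"
  shows "vol x k = infdist (x j) (span (x ` ({1..k} - {j}))) * vol (del x j) (k - 1)"
  using assms
proof (induction k arbitrary: j)
  case 0 then show ?case by simp
next
  case (Suc k)
  show ?case
  proof (cases "j = Suc k")
    case True
    have "vol (del x j) k = vol x k" by (rule vol_cong) (auto simp: del_def True)
    moreover have "{1..Suc k} - {j} = {1..k}" using True by auto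
    ultimately show ?thesis using True by simp
  next
    case False
    then have j: "j \<in> {1..k}" using Suc.prems by auto
    then have k1: "Suc (k - 1) = k" by auto
    define S where "S = x ` ({1..k} - {j})"
    have IH: "vol x k = infdist (x j) (span S) * vol (del x j) (k - 1)"
      using Suc.IH[OF j] S_def by simp
    have "vol (del x j) k = vol (del x j) (Suc (k - 1))" using k1 by simp
    also have "\<dots> = infdist (del x j (Suc (k - 1))) (span (del x j ` {1..k - 1})) * vol (del x j) (k - 1)"
      by (simp only: vol.simps)
    also have "\<dots> = infdist (x (Suc k)) (span S) * vol (del x j) (k - 1)"
    proof -
      have "del x j (Suc (k - 1)) = x (Suc k)" using k1 j by (simp add: del_def)
      moreover have "del x j ` {1..k - 1} = S"
        using del_image[of j "k - 1" x] j k1 by (simp add: S_def)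
      ultimately show ?thesis by simp
    qed
    finally have D: "vol (del x j) k = infdist (x (Suc k)) (span S) * vol (del x j) (k - 1)" .
    have e1: "x ` {1..k} = insert (x j) S" using j by (auto simp: S_def)
    have "{1..Suc k} - {j} = insert (Suc k) ({1..k} - {j})" using j by auto
    then have e2: "x ` ({1..Suc k} - {j}) = insert (x (Suc k)) S" by (simp add: S_def)
    have "vol x (Suc k) = infdist (x (Suc k)) (span (insert (x j) S)) * (infdist (x j) (span S) * vol (del x j) (k - 1))"
      using IH e1 by simp
    also have "\<dots> = (infdist (x (Suc k)) (span (insert (x j) S)) * infdist (x j) (span S)) * vol (del x j) (k - 1)"
      by simp
    also have "\<dots> = (infdist (x j) (span (insert (x (Suc k)) S)) * infdist (x (Suc k)) (span S)) * vol (del x j) (k - 1)"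
      by (simp only: swap)
    also have "\<dots> = infdist (x j) (span (x ` ({1..Suc k} - {j}))) * vol (del x j) k"
      using D e2 by simp
    finally show ?thesis by simp
  qed
qed



lemma span_image_repr:
  fixes x :: "nat \<Rightarrow> 'a::euclidean_space"
  shows "finite I \<Longrightarrow> v \<in> span (x ` I) \<Longrightarrow> \<exists>c. v = (\<Sum>i\<in>I. c i *\<^sub>R x i)"
proof (induction I arbitrary: v rule: finite_induct)
  case empty then show ?case by simp
next
  case (insert i J)
  then have "v \<in> span (insert (x i) (x ` J))" by simp
  then obtain k where "v - k *\<^sub>R x i \<in> span (x ` J)" using span_breakdown_eq by blast
  then obtain c where c: "v - k *\<^sub>R x i = (\<Sum>l\<in>J. c l *\<^sub>R x l)" using insert.IH by blast
  have "(\<Sum>l\<in>insert i J. (c(i := k)) l *\<^sub>R x l) = k *\<^sub>R x i + (\<Sum>l\<in>J. c l *\<^sub>R x l)"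
    using insert.hyps by (simp add: sum.insert) (intro sum.cong, auto)
  also have "\<dots> = v" using c by (simp add: algebra_simps)
  finally show ?case by metis
qed

definition usc :: "(nat \<Rightarrow> real) \<Rightarrow> real \<Rightarrow> bool" where
  "usc g a \<longleftrightarrow> (\<forall>e>0. eventually (\<lambda>n. g n \<le> a + e) sequentially)"

lemma usc_mult:
  assumes "usc g a" "usc h b" "\<And>n. 0 \<le> g n" "\<And>n. 0 \<le> h n" "0 \<le> a" "0 \<le> b"
  shows "usc (\<lambda>n. g n * h n) (a * b)"
  unfolding usc_def
proof (intro allI impI)
  fix e :: real assume e: "e > 0"
  define t where "t = min 1 (e / (a + b + 1))"
  have ab: "a + b + 1 > 0" using assms(5,6) by simp
  have t1: "t > 0" "t \<le> 1" using e ab by (auto simp: t_def)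
  have "t \<le> e / (a + b + 1)" by (simp add: t_def)
  then have "t * (a + b + 1) \<le> e / (a + b + 1) * (a + b + 1)"
    using ab by (intro mult_right_mono) auto
  then have t: "t > 0" "t \<le> 1" "t * (a + b + 1) \<le> e" using t1 ab by auto
  have "eventually (\<lambda>n. g n \<le> a + t) sequentially" "eventually (\<lambda>n. h n \<le> b + t) sequentially"
    using assms(1,2) t(1) unfolding usc_def by auto
  then show "eventually (\<lambda>n. g n * h n \<le> a * b + e) sequentially"
  proof eventually_elim
    case (elim n)
    have "g n * h n \<le> (a + t) * (b + t)"
      using elim assms(3,4,5) t(1) by (intro mult_mono) auto
    also have "\<dots> = a * b + t * (a + b + t)" by (simp add: algebra_simps)
    also have "\<dots> \<le> a * b + t * (a + b + 1)"
      using t by (intro add_left_mono mult_left_mono) auto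
    also have "\<dots> \<le> a * b + e" using t by simp
    finally show ?case .
  qed
qed

lemma usc_infdist:
  fixes xs :: "nat \<Rightarrow> nat \<Rightarrow> 'a::euclidean_space"
  assumes "finite I" "ys \<longlonglongrightarrow> y" "\<forall>i\<in>I. (\<lambda>n. xs n i) \<longlonglongrightarrow> x i"
  shows "usc (\<lambda>n. infdist (ys n) (span (xs n ` I))) (infdist y (span (x ` I)))"
  unfolding usc_def
proof (intro allI impI)
  fix e :: real assume e: "e > 0"
  obtain p where p: "p \<in> span (x ` I)" "\<forall>w\<in>span (x ` I). orthogonal (y - p) w"
    using proj_exists by blast
  have d: "infdist y (span (x ` I)) = norm (y - p)" using infdist_proj[OF p] .
  obtain c where c: "p = (\<Sum>i\<in>I. c i *\<^sub>R x i)" using span_image_repr[OF assms(1) p(1)] by blast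
  define ps where "ps n = (\<Sum>i\<in>I. c i *\<^sub>R xs n i)" for n
  have "ps \<longlonglongrightarrow> p" unfolding ps_def c
    using assms(3) by (intro tendsto_sum tendsto_scaleR tendsto_const) auto
  then have "(\<lambda>n. norm (ys n - ps n)) \<longlonglongrightarrow> norm (y - p)"
    using assms(2) by (intro tendsto_norm tendsto_diff)
  then have ev: "eventually (\<lambda>n. norm (ys n - ps n) < norm (y - p) + e) sequentially"
    using e by (intro order_tendstoD) auto
  have psin: "ps n \<in> span (xs n ` I)" for n
    unfolding ps_def by (intro span_sum span_scale span_base) auto
  show "eventually (\<lambda>n. infdist (ys n) (span (xs n ` I)) \<le> infdist y (span (x ` I)) + e) sequentially"
    using ev
  proof eventually_elim
    case (elim n)
    have "infdist (ys n) (span (xs n ` I)) \<le> dist (ys n) (ps n)" by (rule infdist_le[OF psin])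
    then show ?case using elim d by (simp add: dist_norm)
  qed
qed

lemma usc_vol:
  fixes xs :: "nat \<Rightarrow> nat \<Rightarrow> 'a::euclidean_space"
  assumes "\<forall>i\<in>{1..k}. (\<lambda>n. xs n i) \<longlonglongrightarrow> x i"
  shows "usc (\<lambda>n. vol (xs n) k) (vol x k)"
  using assms
proof (induction k)
  case 0 then show ?case by (simp add: usc_def)
next
  case (Suc k)
  have 1: "usc (\<lambda>n. infdist (xs n (Suc k)) (span (xs n ` {1..k}))) (infdist (x (Suc k)) (span (x ` {1..k})))"
    using Suc.prems by (intro usc_infdist) auto
  have 2: "usc (\<lambda>n. vol (xs n) k) (vol x k)" using Suc by auto
  show ?case using usc_mult[OF 1 2] by (simp add: infdist_nonneg vol_nonneg)
qed

lemma vol_bound: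
  assumes "\<forall>i\<in>{1..k}. norm (x i) \<le> B" "0 \<le> B"
  shows "vol x k \<le> B ^ k"
  using assms
proof (induction k)
  case 0 then show ?case by simp
next
  case (Suc k)
  have "infdist (x (Suc k)) (span (x ` {1..k})) \<le> dist (x (Suc k)) 0"
    by (rule infdist_le[OF span_zero])
  moreover have "norm (x (Suc k)) \<le> B" using Suc.prems(1) by simp
  ultimately have "infdist (x (Suc k)) (span (x ` {1..k})) \<le> B" by simp
  moreover have "vol x k \<le> B ^ k" using Suc by auto
  ultimately show ?case using Suc.prems
    by (simp add: mult_mono infdist_nonneg vol_nonneg)
qed

lemma subseq_tuple:
  fixes f :: "nat \<Rightarrow> nat \<Rightarrow> 'a::euclidean_space"
  assumes "compact G" "\<forall>n. \<forall>i\<in>{1..k}. f n i \<in> G"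
  shows "\<exists>r l. strict_mono r \<and> (\<forall>i\<in>{1..k}. l i \<in> G \<and> (\<lambda>n. f (r n) i) \<longlonglongrightarrow> l i)"
  using assms(2)
proof (induction k)
  case 0
  show ?case by (rule exI[of _ id]) (auto simp: strict_mono_def)
next
  case (Suc k)
  then obtain r l where r: "strict_mono r" "\<forall>i\<in>{1..k}. l i \<in> G \<and> (\<lambda>n. f (r n) i) \<longlonglongrightarrow> l i"
    by auto
  have "\<forall>n. f (r n) (Suc k) \<in> G" using Suc.prems by auto
  then obtain z r' where z: "z \<in> G" "strict_mono r'" "((\<lambda>n. f (r n) (Suc k)) \<circ> r') \<longlonglongrightarrow> z"
    using seq_compactE[OF compact_imp_seq_compact[OF assms(1)]] by metis
  show ?case
  proof (intro exI conjI ballI)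
    show "strict_mono (r \<circ> r')" using r(1) z(2) by (rule strict_mono_o)
    fix i assume i: "i \<in> {1..Suc k}"
    show "(l(Suc k := z)) i \<in> G" using i r(2) z(1) by (cases "i = Suc k") auto
    show "(\<lambda>n. f ((r \<circ> r') n) i) \<longlonglongrightarrow> (l(Suc k := z)) i"
    proof (cases "i = Suc k")
      case True then show ?thesis using z(3) by (simp add: comp_def)
    next
      case False
      then have "(\<lambda>n. f (r n) i) \<longlonglongrightarrow> l i" using i r(2) by auto
      from LIMSEQ_subseq_LIMSEQ[OF this z(2)] False show ?thesis by (simp add: comp_def)
    qed
  qed
qed

lemma extend_subspace:
  fixes S :: "'a::euclidean_space set"
  assumes "subspace S" "dim S \<le> n" "n \<le> DIM('a)"
  shows "\<exists>T. subspace T \<and> S \<subseteq> T \<and> dim T = n"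
  using assms(2,3)
proof (induction n)
  case 0 then show ?case using assms(1) by auto
next
  case (Suc n)
  show ?case
  proof (cases "dim S = Suc n")
    case True then show ?thesis using assms(1) by auto
  next
    case False
    then obtain T where T: "subspace T" "S \<subseteq> T" "dim T = n" using Suc by auto
    have "T \<noteq> UNIV" using T(3) Suc.prems(2) by auto
    then obtain y where y: "y \<notin> T" by auto
    then have ys: "y \<notin> span T" using T(1) span_eq_iff by blast
    show ?thesis
    proof (intro exI conjI)
      show "subspace (span (insert y T))" by simp
      show "S \<subseteq> span (insert y T)" using T(2) span_superset by blast
      show "dim (span (insert y T)) = Suc n" using ys T(3) by (simp add: dim_insert)
    qed
  qed
qed



theorem mainTheorem6:
  fixes \<Gamma> :: "'a::euclidean_space set" and \<delta> :: real and m :: nat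
  assumes "compact \<Gamma>" and "\<delta> > 0" and "m \<le> DIM('a)"
    and "\<forall>P \<in> Grassmannian m. \<exists>x \<in> \<Gamma>. infdist x P \<ge> \<delta>"
  shows "\<exists>x :: nat \<Rightarrow> 'a. (\<forall>i \<in> {1..m+1}. x i \<in> \<Gamma>) \<and> min_height x (m+1) \<ge> \<delta>"
proof -
  have far: "\<exists>y\<in>\<Gamma>. \<delta> \<le> infdist y (span (x ` I))" if I: "finite I" "card I \<le> m" for x :: "nat \<Rightarrow> 'a" and I
  proof -
    have "dim (span (x ` I)) \<le> card (x ` I)"
      using I(1) by (intro dim_le_card) auto
    also have "\<dots> \<le> m" using card_image_le[OF I(1), of x] I(2) by linarith
    finally obtain P where P: "subspace P" "span (x ` I) \<subseteq> P" "dim P = m"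
      using extend_subspace[of "span (x ` I)" m] assms(3) by auto
    then have "P \<in> Grassmannian m" by (simp add: Grassmannian_def)
    then obtain y where y: "y \<in> \<Gamma>" "\<delta> \<le> infdist y P" using assms(4) by blast
    have "infdist y P \<le> infdist y (span (x ` I))"
      using P(2) span_zero by (intro infdist_mono) auto
    then show ?thesis using y by force
  qed
  define T where "T = {x :: nat \<Rightarrow> 'a. \<forall>i\<in>{1..m+1}. x i \<in> \<Gamma>}"
  have pos: "k \<le> m + 1 \<Longrightarrow> \<exists>x :: nat \<Rightarrow> 'a. (\<forall>i\<in>{1..k}. x i \<in> \<Gamma>) \<and> vol x k > 0" for k
  proof (induction k)
    case 0 then show ?case by simp
  next
    case (Suc k)
    then obtain x :: "nat \<Rightarrow> 'a" where x: "\<forall>i\<in>{1..k}. x i \<in> \<Gamma>" "vol x k > 0" by auto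
    obtain y where y: "y \<in> \<Gamma>" "\<delta> \<le> infdist y (span (x ` {1..k}))"
      using far[of "{1..k}" x] Suc.prems by auto
    define x' where "x' = x(Suc k := y)"
    have im: "x' ` {1..k} = x ` {1..k}" unfolding x'_def by auto
    have vk: "vol x' k = vol x k" by (rule vol_cong) (auto simp: x'_def)
    have "vol x' (Suc k) = infdist y (span (x ` {1..k})) * vol x k"
      using im vk by (simp add: x'_def)
    also have "\<dots> > 0" using y(2) assms(2) x(2) by simp
    finally have "vol x' (Suc k) > 0" .
    moreover have "\<forall>i\<in>{1..Suc k}. x' i \<in> \<Gamma>" using x y(1) by (auto simp: x'_def)
    ultimately show ?case by blast
  qed
  obtain x0 where x0: "x0 \<in> T" "vol x0 (m+1) > 0" using pos[of "m+1"] by (auto simp: T_def)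
  obtain b where b: "b > 0" "\<forall>x\<in>\<Gamma>. norm x \<le> b"
    using compact_imp_bounded[OF assms(1)] bounded_pos by blast
  define V where "V = (\<lambda>x. vol x (m+1)) ` T"
  have Vne: "V \<noteq> {}" using x0 V_def by auto
  have "vol x (m+1) \<le> b ^ (m+1)" if "x \<in> T" for x
  proof (rule vol_bound)
    show "\<forall>i\<in>{1..m+1}. norm (x i) \<le> b" using that b(2) unfolding T_def by blast
  qed (use b in simp)
  then have Vbdd: "bdd_above V"
    unfolding V_def by (intro bdd_aboveI[of _ "b ^ (m+1)"]) auto
  define Vs where "Vs = Sup V"
  have "\<exists>x\<in>T. Vs - inverse (real (Suc n)) < vol x (m+1)" for n
  proof -
    have "Vs - inverse (real (Suc n)) < Vs" by simp
    then obtain v where "v \<in> V" "Vs - inverse (real (Suc n)) < v"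
      using less_cSup_iff[OF Vne Vbdd] Vs_def by blast
    then show ?thesis unfolding V_def by auto
  qed
  then obtain xs where xs: "\<And>n. xs n \<in> T" "\<And>n. Vs - inverse (real (Suc n)) < vol (xs n) (m+1)"
    by metis
  obtain r l where rl: "strict_mono r" "\<forall>i\<in>{1..m+1}. l i \<in> \<Gamma> \<and> (\<lambda>n. xs (r n) i) \<longlonglongrightarrow> l i"
    using subseq_tuple[OF assms(1), where f = xs and k = "m+1"] xs(1) unfolding T_def by blast
  have lT: "l \<in> T" using rl(2) T_def by auto
  have u: "usc (\<lambda>n. vol (xs (r n)) (m+1)) (vol l (m+1))"
    using rl(2) by (intro usc_vol) auto
  have lge: "Vs \<le> vol l (m+1)"
  proof (rule ccontr)
    assume "\<not> Vs \<le> vol l (m+1)"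
    define e where "e = (Vs - vol l (m+1)) / 2"
    have e: "e > 0" using \<open>\<not> Vs \<le> vol l (m+1)\<close> e_def by simp
    have ev1: "eventually (\<lambda>n. vol (xs (r n)) (m+1) \<le> vol l (m+1) + e) sequentially"
      using u e unfolding usc_def by blast
    have "(\<lambda>n. inverse (real (Suc (r n)))) \<longlonglongrightarrow> 0"
      using LIMSEQ_subseq_LIMSEQ[OF LIMSEQ_inverse_real_of_nat rl(1)] by (simp add: comp_def)
    then have ev2: "eventually (\<lambda>n. inverse (real (Suc (r n))) < e) sequentially"
      using e by (intro order_tendstoD) auto
    have "eventually (\<lambda>n. False) sequentially"
      using ev1 ev2
    proof eventually_elim
      case (elim n)
      have a1: "Vs - e < vol (xs (r n)) (m+1)" using elim(2) xs(2)[of "r n"] by linarith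
      have a2: "vol l (m+1) + e = Vs - e" using e_def by simp
      show ?case using a1 a2 elim(1) by linarith
    qed
    then show False by simp
  qed
  have lmax: "\<forall>x\<in>T. vol x (m+1) \<le> vol l (m+1)"
  proof
    fix x assume "x \<in> T"
    then have "vol x (m+1) \<le> Vs" unfolding Vs_def V_def
      using Vbdd V_def by (intro cSup_upper) auto
    then show "vol x (m+1) \<le> vol l (m+1)" using lge by simp
  qed
  have lpos: "vol l (m+1) > 0" using lmax x0 by force
  have Dj: "\<delta> \<le> infdist (l j) (span (l ` ({1..m+1} - {j})))" if j: "j \<in> {1..m+1}" for j
  proof -
    define D where "D = infdist (l j) (span (l ` ({1..m+1} - {j})))"
    define W where "W = vol (del l j) m"
    have vl: "vol l (m+1) = D * W" using vol_del[OF j, of l] D_def W_def by simp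
    have DW: "0 < D * W" using lpos vl by linarith
    have "0 \<le> D" unfolding D_def by (rule infdist_nonneg)
    then have Wpos: "W > 0" using DW zero_less_mult_iff[of D W] by linarith
    have "finite ({1..m+1} - {j})" "card ({1..m+1} - {j}) \<le> m" using j by auto
    then obtain y where y: "y \<in> \<Gamma>" "\<delta> \<le> infdist y (span (l ` ({1..m+1} - {j})))"
      using far by blast
    define l' where "l' = l(j := y)"
    have l'T: "l' \<in> T" using lT y(1) by (auto simp: T_def l'_def)
    have im: "l' ` ({1..m+1} - {j}) = l ` ({1..m+1} - {j})" unfolding l'_def by auto
    have dl: "del l' j = del l j" unfolding l'_def del_def by (rule ext) auto
    have "vol l' (m+1) = infdist y (span (l ` ({1..m+1} - {j}))) * W"
      using vol_del[OF j, of l'] im dl W_def by (simp add: l'_def)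
    then have "infdist y (span (l ` ({1..m+1} - {j}))) * W \<le> D * W"
      using lmax l'T vl by metis
    then have "infdist y (span (l ` ({1..m+1} - {j}))) \<le> D" using Wpos by simp
    then show ?thesis using y(2) D_def by simp
  qed
  show ?thesis
  proof (intro exI conjI)
    show "\<forall>i\<in>{1..m+1}. l i \<in> \<Gamma>" using lT T_def by auto
    show "\<delta> \<le> min_height l (m+1)" unfolding min_height_def
      using Dj by (subst Min_ge_iff) auto
  qed
qed

end
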